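(* In the logic $\mathrm{q}\L^{*}$, for all formulas $p,q,r,t\in F(V)$: (1) if $\vdash p\leftrightarrow q$, then $\vdash\neg p\leftrightarrow\neg q$; (2) if $\vdash p\leftrightarrow q$ and $\vdash r\leftrightarrow t$, then $\vdash(p\to r)\leftrightarrow(q\to t)$; (3) if $\vdash p\leftrightarrow q$ and $\vdash q\leftrightarrow r$, then $\vdash p\leftrightarrow r$; (4) $\vdash\neg(p\to q)\leftrightarrow(\neg p\to\neg q)$; (5) $\vdash p\leftrightarrow p$; (6) if $\vdash p_1\leftrightarrow r_1$, then $\vdash p\leftrightarrow r$, where $p_1$ is a subformula of $p$ and $r$ is obtained by replacing $p_1$ in $p$ with $r_1$; (7) $\vdash(p\to p)\leftrightarrow(q\to q)$; (8) $\vdash\neg\neg(p\to p)\leftrightarrow(p\to p)$; (9) $\vdash p\leftrightarrow\neg\neg p$; (10) $\vdash(\neg p\to q)\leftrightarrow(\neg q\to p)$; (11) $\vdash(\neg p)^{+}\leftrightarrow\neg p^{-}$ and $\vdash(\neg p)^{-}\leftrightarrow\neg p^{+}$; (12) if $\vdash p\leftrightarrow q$, then $\vdash p^{+}\leftrightarrow q^{+}$ and $\vdash p^{-}\leftrightarrow q^{-}$.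
   Context: Let $V=\{p_1,p_2,\ldots\}$ be a set of propositional variables and $F(V)$ the set of formulas built from $V$ and the constant $1$ with the binary connective $\to$ and the unary connectives $\neg$, ${}^{+}$, ${}^{-}$ (postfix ${}^+,{}^-$ bind tighter than $\neg$, which binds tighter than $\to$; so $\neg p^{-}$ means $\neg(p^{-})$). Abbreviations: $p\vee q:=((p^{+}\to q^{+})^{+}\to(\neg p)^{-})\to((q^{-}\to p^{-})^{-}\to p^{-})$; an axiom written $A\leftrightarrow B$ stands for the two axioms $A\to B$ and $B\to A$, and $\vdash A\leftrightarrow B$ means $\vdash A\to B$ and $\vdash B\to A$. Axiom schemas of $\mathrm{q}\L^{*}$ (for all formulas $p,q,r$): (Q1) $(p\to q)\leftrightarrow(\neg q\to\neg p)$; (Q2) $1\leftrightarrow((1\to p)\to 1)$; (Q3) $p\leftrightarrow((q\to q)\to p)$; (Q4) $(p\to q)\leftrightarrow((q^{+}\to p^{-})\to(p^{+}\to q^{-}))$; (Q5) $\neg(p\to q)\leftrightarrow(q\to p)$; (Q6) $(p\to(\neg p\to q))^{+}\leftrightarrow(p^{+}\to(\neg p^{+}\to q^{+}))$; (Q7) $(p\to(q\vee r))\leftrightarrow((p\to r)\vee(p\to q))$; (Q8) $(p\vee(q\vee r))\leftrightarrow((p\vee q)\vee r)$; (Q9) $((p\to 1)\to((q\to 1)\to r))\to((q\to 1)\to((p\to 1)\to r))$; (Q10) $p\to 1$; (Q11) $((1\to 1)\to p^{+})\leftrightarrow((p\to 1)\to 1)$ and $((1\to 1)\to p^{-})\leftrightarrow((p\to\neg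 1)\to\neg 1)$. Deduction rules: (R1) from $p$ and $p\to q$ infer $(r\to r)\to q$; (R2) from $(r\to r)\to(p\to q)$ infer $p\to q$; (R3) from $p\to q$ and $r\to t$ infer $(q\to r)\to(p\to t)$. A proof of $q_n$ is a finite sequence $q_1,\dots,q_n$ of formulas each of which is an axiom or obtained from earlier members by a rule; then $\vdash q_n$. *)

theory Defs
  imports Main
begin

datatype form =
    Var nat
  | One
  | Imp form form
  | Neg form
  | Pls form
  | Mns form

definition Vee :: "form \<Rightarrow> form \<Rightarrow> form" where
  "Vee p q = Imp (Imp (Pls (Imp (Pls p) (Pls q))) (Mns (Neg p)))
                 (Imp (Mns (Imp (Mns q) (Mns p))) (Mns p))"

text \<open>Axioms of qL*; each A <-> B schema yields the two axioms A -> B and B -> A.\<close>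
inductive axiom :: "form \<Rightarrow> bool" where
  Q1a: "axiom (Imp (Imp p q) (Imp (Neg q) (Neg p)))"
| Q1b: "axiom (Imp (Imp (Neg q) (Neg p)) (Imp p q))"
| Q2a: "axiom (Imp One (Imp (Imp One p) One))"
| Q2b: "axiom (Imp (Imp (Imp One p) One) One)"
| Q3a: "axiom (Imp p (Imp (Imp q q) p))"
| Q3b: "axiom (Imp (Imp (Imp q q) p) p)"
| Q4a: "axiom (Imp (Imp p q) (Imp (Imp (Pls q) (Mns p)) (Imp (Pls p) (Mns q))))"
| Q4b: "axiom (Imp (Imp (Imp (Pls q) (Mns p)) (Imp (Pls p) (Mns q))) (Imp p q))"
| Q5a: "axiom (Imp (Neg (Imp p q)) (Imp q p))"
| Q5b: "axiom (Imp (Imp q p) (Neg (Imp p q)))"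
| Q6a: "axiom (Imp (Pls (Imp p (Imp (Neg p) q))) (Imp (Pls p) (Imp (Neg (Pls p)) (Pls q))))"
| Q6b: "axiom (Imp (Imp (Pls p) (Imp (Neg (Pls p)) (Pls q))) (Pls (Imp p (Imp (Neg p) q))))"
| Q7a: "axiom (Imp (Imp p (Vee q r)) (Vee (Imp p r) (Imp p q)))"
| Q7b: "axiom (Imp (Vee (Imp p r) (Imp p q)) (Imp p (Vee q r)))"
| Q8a: "axiom (Imp (Vee p (Vee q r)) (Vee (Vee p q) r))"
| Q8b: "axiom (Imp (Vee (Vee p q) r) (Vee p (Vee q r)))"
| Q9: "axiom (Imp (Imp (Imp p One) (Imp (Imp q One) r)) (Imp (Imp q One) (Imp (Imp p One) r)))"
| Q10: "axiom (Imp p One)"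
| Q11a: "axiom (Imp (Imp (Imp One One) (Pls p)) (Imp (Imp p One) One))"
| Q11b: "axiom (Imp (Imp (Imp p One) One) (Imp (Imp One One) (Pls p)))"
| Q11c: "axiom (Imp (Imp (Imp One One) (Mns p)) (Imp (Imp p (Neg One)) (Neg One)))"
| Q11d: "axiom (Imp (Imp (Imp p (Neg One)) (Neg One)) (Imp (Imp One One) (Mns p)))"

text \<open>Provability (least set containing the axioms and closed under R1--R3;
  equivalent to existence of a finite proof sequence).\<close>
inductive prov :: "form \<Rightarrow> bool" where
  ax: "axiom p \<Longrightarrow> prov p"
| R1: "prov p \<Longrightarrow> prov (Imp p q) \<Longrightarrow> prov (Imp (Imp r r) q)"
| R2: "prov (Imp (Imp r r) (Imp p q)) \<Longrightarrow> prov (Imp p q)"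
| R3: "prov (Imp p q) \<Longrightarrow> prov (Imp r t) \<Longrightarrow> prov (Imp (Imp q r) (Imp p t))"

definition prov_iff :: "form \<Rightarrow> form \<Rightarrow> bool" where
  "prov_iff a b \<longleftrightarrow> prov (Imp a b) \<and> prov (Imp b a)"

inductive repl :: "form \<Rightarrow> form \<Rightarrow> form \<Rightarrow> form \<Rightarrow> bool" where
  here: "repl p1 r1 p1 r1"
| impL: "repl p1 r1 a b \<Longrightarrow> repl p1 r1 (Imp a c) (Imp b c)"
| impR: "repl p1 r1 a b \<Longrightarrow> repl p1 r1 (Imp c a) (Imp c b)"
| neg: "repl p1 r1 a b \<Longrightarrow> repl p1 r1 (Neg a) (Neg b)"
| pls: "repl p1 r1 a b \<Longrightarrow> repl p1 r1 (Pls a) (Pls b)"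
| mns: "repl p1 r1 a b \<Longrightarrow> repl p1 r1 (Mns a) (Mns b)"

end

theory Submission
  imports Defs
begin

lemma A: "axiom p \<Longrightarrow> prov p" by (rule prov.ax)

lemma mp: "prov p \<Longrightarrow> prov (Imp p (Imp a b)) \<Longrightarrow> prov (Imp a b)"
  by (rule prov.R2[of One], rule prov.R1)

lemma idf: "prov (Imp x x)"
proof -
  have "prov (Imp (Imp (Imp (Imp One One) x) (Imp (Imp One One) x)) (Imp x x))"
    by (rule prov.R3, rule A, rule axiom.Q3a, rule A, rule axiom.Q3b)
  then show ?thesis by (rule prov.R2)
qed

lemma tr: "prov (Imp a b) \<Longrightarrow> prov (Imp b c) \<Longrightarrow> prov (Imp a c)"
  by (rule mp, assumption, rule prov.R3, assumption, rule idf)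

lemma I_refl: "prov_iff p p" by (simp add: prov_iff_def idf)
lemma I_sym: "prov_iff p q \<Longrightarrow> prov_iff q p" by (simp add: prov_iff_def)
lemma I_tr: "prov_iff p q \<Longrightarrow> prov_iff q r \<Longrightarrow> prov_iff p r"
  unfolding prov_iff_def using tr by blast

lemma I_neg: "prov_iff p q \<Longrightarrow> prov_iff (Neg p) (Neg q)"
  unfolding prov_iff_def using mp A axiom.Q1a by blast

lemma I_imp: "prov_iff p q \<Longrightarrow> prov_iff r t \<Longrightarrow> prov_iff (Imp p r) (Imp q t)"
  unfolding prov_iff_def using prov.R3 by blast

lemma I_ax: "axiom (Imp a b) \<Longrightarrow> axiom (Imp b a) \<Longrightarrow> prov_iff a b"
  unfolding prov_iff_def using A by blast

lemma I_Q1: "prov_iff (Imp p q) (Imp (Neg q) (Neg p))"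
  by (rule I_ax, rule axiom.Q1a, rule axiom.Q1b)
lemma I_Q3: "prov_iff p (Imp (Imp q q) p)"
  by (rule I_ax, rule axiom.Q3a, rule axiom.Q3b)
lemma I_Q5: "prov_iff (Neg (Imp p q)) (Imp q p)"
  by (rule I_ax, rule axiom.Q5a, rule axiom.Q5b)
lemma I_Q11p: "prov_iff (Imp (Imp One One) (Pls p)) (Imp (Imp p One) One)"
  by (rule I_ax, rule axiom.Q11a, rule axiom.Q11b)
lemma I_Q11m: "prov_iff (Imp (Imp One One) (Mns p)) (Imp (Imp p (Neg One)) (Neg One))"
  by (rule I_ax, rule axiom.Q11c, rule axiom.Q11d)

lemma I_nn: "prov_iff p (Neg (Neg p))"
proof -
  let ?u = "Imp One One"
  have 1: "prov_iff p (Imp ?u p)" by (rule I_Q3)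
  have 2: "prov_iff (Imp ?u p) (Neg (Neg (Imp ?u p)))"
    by (rule I_sym, rule I_tr, rule I_neg, rule I_Q5, rule I_Q5)
  have 3: "prov_iff (Neg (Neg (Imp ?u p))) (Neg (Neg p))"
    by (rule I_neg, rule I_neg, rule I_sym, rule 1)
  show ?thesis using 1 2 3 I_tr by blast
qed

lemma I_contra: "prov_iff (Imp (Neg p) q) (Imp (Neg q) p)"
  by (rule I_tr, rule I_Q1, rule I_imp, rule I_refl, rule I_sym, rule I_nn)

lemma I_pls_def: "prov_iff (Pls p) (Imp (Imp p One) One)"
  by (rule I_tr, rule I_Q3, rule I_Q11p)
lemma I_mns_def: "prov_iff (Mns p) (Imp (Imp p (Neg One)) (Neg One))"
  by (rule I_tr, rule I_Q3, rule I_Q11m)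

lemma I_pls: "prov_iff p q \<Longrightarrow> prov_iff (Pls p) (Pls q)"
  by (rule I_tr, rule I_pls_def, rule I_tr[rotated], rule I_sym, rule I_pls_def,
      rule I_imp, rule I_imp, assumption, rule I_refl, rule I_refl)
lemma I_mns: "prov_iff p q \<Longrightarrow> prov_iff (Mns p) (Mns q)"
  by (rule I_tr, rule I_mns_def, rule I_tr[rotated], rule I_sym, rule I_mns_def,
      rule I_imp, rule I_imp, assumption, rule I_refl, rule I_refl)

lemma I_repl: "repl p1 r1 a b \<Longrightarrow> prov_iff p1 r1 \<Longrightarrow> prov_iff a b"
  by (induction rule: repl.induct) (auto intro: I_imp I_refl I_neg I_pls I_mns)

lemma I_11a: "prov_iff (Pls (Neg p)) (Neg (Mns p))"
proof -
  have a: "prov_iff (Neg (Mns p)) (Imp (Neg One) (Imp p (Neg One)))"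
    by (rule I_tr, rule I_neg, rule I_mns_def, rule I_Q5)
  have b: "prov_iff (Imp (Neg One) (Imp p (Neg One))) (Imp (Imp (Neg One) p) One)"
    by (rule I_tr, rule I_Q1, rule I_imp, rule I_Q5, rule I_sym, rule I_nn)
  have c: "prov_iff (Imp (Imp (Neg One) p) One) (Imp (Imp (Neg p) One) One)"
    by (rule I_imp, rule I_sym, rule I_contra, rule I_refl)
  show ?thesis
    by (rule I_tr, rule I_pls_def, rule I_sym, rule I_tr, rule a, rule I_tr, rule b, rule c)
qed

lemma I_11b: "prov_iff (Mns (Neg p)) (Neg (Pls p))"
proof -
  have a: "prov_iff (Neg (Pls p)) (Imp One (Imp p One))"
    by (rule I_tr, rule I_neg, rule I_pls_def, rule I_Q5)
  have c: "prov_iff (Imp (Imp (Neg p) (Neg One)) (Neg One)) (Imp (Imp One p) (Neg One))"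
    by (rule I_imp, rule I_sym, rule I_Q1, rule I_refl)
  have b': "prov_iff (Imp (Imp One p) (Neg One)) (Imp One (Imp p One))"
    by (rule I_tr, rule I_Q1, rule I_imp, rule I_sym, rule I_nn, rule I_Q5)
  show ?thesis
    by (rule I_tr, rule I_mns_def, rule I_tr, rule c, rule I_tr, rule b', rule I_sym, rule a)
qed

theorem proposition5p1:
  fixes p q r t :: form
  shows "(prov_iff p q \<longrightarrow> prov_iff (Neg p) (Neg q))
    \<and> (prov_iff p q \<and> prov_iff r t \<longrightarrow> prov_iff (Imp p r) (Imp q t))
    \<and> (prov_iff p q \<and> prov_iff q r \<longrightarrow> prov_iff p r)
    \<and> prov_iff (Neg (Imp p q)) (Imp (Neg p) (Neg q))
    \<and> prov_iff p p
    \<and> (\<forall>p1 r1 a b. prov_iff p1 r1 \<and> repl p1 r1 a b \<longrightarrow> prov_iff a b)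
    \<and> prov_iff (Imp p p) (Imp q q)
    \<and> prov_iff (Neg (Neg (Imp p p))) (Imp p p)
    \<and> prov_iff p (Neg (Neg p))
    \<and> prov_iff (Imp (Neg p) q) (Imp (Neg q) p)
    \<and> prov_iff (Pls (Neg p)) (Neg (Mns p)) \<and> prov_iff (Mns (Neg p)) (Neg (Pls p))
    \<and> (prov_iff p q \<longrightarrow> prov_iff (Pls p) (Pls q) \<and> prov_iff (Mns p) (Mns q))"
proof -
  have s4: "prov_iff (Neg (Imp p q)) (Imp (Neg p) (Neg q))"
    by (rule I_tr, rule I_Q5, rule I_Q1)
  have s7: "prov_iff (Imp p p) (Imp q q)"
    unfolding prov_iff_def
    using mp[OF idf A[OF axiom.Q3a]] by blast
  have s8: "prov_iff (Neg (Neg (Imp p p))) (Imp p p)"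
    by (rule I_tr, rule I_neg, rule I_Q5, rule I_Q5)
  show ?thesis
    apply (intro conjI impI allI)
    apply (erule I_neg)
    apply (erule conjE, erule (1) I_imp)
    apply (erule conjE, erule (1) I_tr)
    apply (rule s4)
    apply (rule I_refl)
    apply (erule conjE, erule (1) I_repl[rotated])
    apply (rule s7)
    apply (rule s8)
    apply (rule I_nn)
    apply (rule I_contra)
    apply (rule I_11a)
    apply (rule I_11b)
    apply (erule I_pls)
    apply (erule I_mns)
    done
qed

end
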